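(* Let $G$ be a DCG containing a cycle $C=(v_1,\dots,v_k)$ of distinct vertices, $k\ge2$, let $H=\textsc{Reverse}(G,C)$, and let $\overline{C}=(v_k,v_{k-1},\dots,v_1)$ be the reversed cycle, which is a cycle of $H$. Then: (1) every vertex has the same set of descendants in $G$ as in $H$; (2) $G=\textsc{Reverse}(H,\overline{C})$.
   Context: A DCG is a directed graph without self-loops. A vertex $x$ is a descendant of $v$ if there is a directed path from $v$ to $x$. $\mathrm{Pa}_G(v)$ is the set of $u$ with $u\to v$ in $G$. For a cycle $C=(v_1,\dots,v_k)$ (edges $v_i\to v_{i+1}$, indices mod $k$), $\textsc{Reverse}(G,C)$ is the DCG on the same vertex set with edge set $$\{v_{i+1}\to v_i\}_{i=1}^k\ \cup\ \{a\to b\in E(G): b\notin C\}\ \cup\ \{w\to v_{i-1} : 1\le i\le k,\ w\in \mathrm{Pa}_G(v_i)\setminus\{v_{i-1}\}\}$$ (indices mod $k$); here, for a cycle listed as $(u_1,\dots,u_k)$, the role of $v_{i-1}$ is played by the predecessor of the vertex along that cycle. *)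

theory Defs
  imports Main
begin

definition dcg :: "'a set \<Rightarrow> ('a \<times> 'a) set \<Rightarrow> bool" where
  "dcg V E \<longleftrightarrow> finite V \<and> E \<subseteq> V \<times> V \<and> (\<forall>v. (v, v) \<notin> E)"

definition pa :: "('a \<times> 'a) set \<Rightarrow> 'a \<Rightarrow> 'a set" where
  "pa E v = {u. (u, v) \<in> E}"

definition desc :: "('a \<times> 'a) set \<Rightarrow> 'a \<Rightarrow> 'a set" where
  "desc E v = {x. (v, x) \<in> E\<^sup>*}"

definition is_cycle :: "('a \<times> 'a) set \<Rightarrow> 'a list \<Rightarrow> bool" where
  "is_cycle E cs \<longleftrightarrow> length cs \<ge> 2 \<and> distinct cs \<and>
     (\<forall>i < length cs. (cs ! i, cs ! ((i + 1) mod length cs)) \<in> E)"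

text \<open>Edge set of Reverse(G, C); the vertex set is unchanged. Index i-1 mod k is (i + k - 1) mod k.\<close>
definition reverse_edges :: "('a \<times> 'a) set \<Rightarrow> 'a list \<Rightarrow> ('a \<times> 'a) set" where
  "reverse_edges E cs =
     (let k = length cs in
       {(cs ! ((i + 1) mod k), cs ! i) | i. i < k}
     \<union> {(a, b). (a, b) \<in> E \<and> b \<notin> set cs}
     \<union> {(w, cs ! ((i + k - 1) mod k)) | i w. i < k \<and> w \<in> pa E (cs ! i) - {cs ! ((i + k - 1) mod k)}})"

end

theory Submission
  imports Defs
begin

lemma modpred: "(i::nat) < k \<Longrightarrow> j < k \<Longrightarrow> ((i + k - 1) mod k = j) \<longleftrightarrow> (i = (j + 1) mod k)"
proof -
  assume a: "i < k" "j < k"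
  show ?thesis
  proof (cases "i = 0")
    case True
    then show ?thesis using a by (cases "j = k - 1") auto
  next
    case False
    then have "(i + k - 1) mod k = i - 1" using a
      by (metis Nat.add_diff_assoc2 One_nat_def Suc_leI add.commute bot_nat_0.not_eq_extremum less_imp_diff_less mod_add_self1 mod_less)
    moreover have "(j+1) mod k = (if j = k - 1 then 0 else j + 1)" using a by auto
    ultimately show ?thesis using a False by auto
  qed
qed

lemma rev_char_in:
  assumes d: "distinct cs" and j: "j < length cs"
  shows "(a, cs ! j) \<in> reverse_edges E cs \<longleftrightarrow>
     a = cs ! ((j + 1) mod length cs) \<or> ((a, cs ! ((j + 1) mod length cs)) \<in> E \<and> a \<noteq> cs ! j)"
proof -
  let ?k = "length cs"
  have k: "?k > 0" using j by auto
  have inj: "\<And>x y. x < ?k \<Longrightarrow> y < ?k \<Longrightarrow> cs ! x = cs ! y \<longleftrightarrow> x = y"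
    using d by (simp add: nth_eq_iff_index_eq)
  have A: "(\<exists>i. (a, cs ! j) = (cs ! ((i + 1) mod ?k), cs ! i) \<and> i < ?k) \<longleftrightarrow> a = cs ! ((j + 1) mod ?k)"
    using inj j by auto
  have B: "(\<exists>i w. (a, cs ! j) = (w, cs ! ((i + ?k - 1) mod ?k)) \<and> i < ?k \<and> w \<in> pa E (cs ! i) - {cs ! ((i + ?k - 1) mod ?k)})
     \<longleftrightarrow> ((a, cs ! ((j + 1) mod ?k)) \<in> E \<and> a \<noteq> cs ! j)"
  proof
    assume "\<exists>i w. (a, cs ! j) = (w, cs ! ((i + ?k - 1) mod ?k)) \<and> i < ?k \<and> w \<in> pa E (cs ! i) - {cs ! ((i + ?k - 1) mod ?k)}"
    then obtain i where i: "i < ?k" "cs ! j = cs ! ((i + ?k - 1) mod ?k)" "(a, cs ! i) \<in> E" "a \<noteq> cs ! j"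
      by (auto simp: pa_def)
    have "(i + ?k - 1) mod ?k = j" using i(2) inj[of j "(i + ?k - 1) mod ?k"] j k by auto
    then have "i = (j+1) mod ?k" using modpred i j by blast
    then show "(a, cs ! ((j + 1) mod ?k)) \<in> E \<and> a \<noteq> cs ! j" using i by auto
  next
    assume h: "(a, cs ! ((j + 1) mod ?k)) \<in> E \<and> a \<noteq> cs ! j"
    let ?i = "(j + 1) mod ?k"
    have "?i < ?k" using k by auto
    moreover have "(?i + ?k - 1) mod ?k = j" using modpred[of ?i ?k j] j k by auto
    ultimately show "\<exists>i w. (a, cs ! j) = (w, cs ! ((i + ?k - 1) mod ?k)) \<and> i < ?k \<and> w \<in> pa E (cs ! i) - {cs ! ((i + ?k - 1) mod ?k)}"
      using h by (intro exI[of _ ?i] exI[of _ a]) (auto simp: pa_def)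
  qed
  have "cs ! j \<in> set cs" using j by auto
  then show ?thesis unfolding reverse_edges_def Let_def using A B by blast
qed

lemma rev_char_out:
  assumes "b \<notin> set cs"
  shows "(a, b) \<in> reverse_edges E cs \<longleftrightarrow> (a, b) \<in> E"
proof -
  have "\<And>i. i < length cs \<Longrightarrow> cs ! ((i + length cs - 1) mod length cs) \<in> set cs"
    by (intro nth_mem) (metis length_pos_if_in_set mod_less_divisor nth_mem)
  then show ?thesis using assms unfolding reverse_edges_def Let_def by auto
qed

lemma rev_nth_cyc:
  assumes i: "i < length cs"
  shows "rev cs ! (length cs - 1 - i) = cs ! i"
    and "rev cs ! ((length cs - 1 - i + 1) mod length cs) = cs ! ((i + length cs - 1) mod length cs)"
proof -
  show "rev cs ! (length cs - 1 - i) = cs ! i" using i by (simp add: rev_nth)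
  show "rev cs ! ((length cs - 1 - i + 1) mod length cs) = cs ! ((i + length cs - 1) mod length cs)"
  proof (cases "i = 0")
    case True
    then show ?thesis using i by (simp add: rev_nth)
  next
    case False
    have "(i + length cs - 1) mod length cs = i - 1" using i False
      by (metis Nat.add_diff_assoc2 One_nat_def Suc_leI add.commute bot_nat_0.not_eq_extremum less_imp_diff_less mod_add_self1 mod_less)
    moreover have "(length cs - 1 - i + 1) mod length cs = length cs - 1 - i + 1" using i False by auto
    moreover have "length cs - Suc (length cs - 1 - i + 1) = i - 1" using i False by auto
    ultimately show ?thesis using i False by (simp add: rev_nth)
  qed
qed

lemma fwd_path:
  assumes "is_cycle E cs" "i < length cs"
  shows "(cs ! i, cs ! ((i + m) mod length cs)) \<in> E\<^sup>*"
proof (induction m)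
  case 0 then show ?case using assms by simp
next
  case (Suc m)
  have "(i + m) mod length cs < length cs" using assms(2) by (intro mod_less_divisor) linarith
  then have "(cs ! ((i + m) mod length cs), cs ! (((i + m) mod length cs + 1) mod length cs)) \<in> E"
    using assms(1) unfolding is_cycle_def by blast
  moreover have "((i + m) mod length cs + 1) mod length cs = (i + Suc m) mod length cs"
    by (metis add_Suc_right mod_Suc_eq Suc_eq_plus1)
  ultimately show ?case using Suc by (metis rtrancl_into_rtrancl)
qed

lemma rev_cyc_edge: "j < length cs \<Longrightarrow> (cs ! ((j + 1) mod length cs), cs ! j) \<in> reverse_edges E cs"
  unfolding reverse_edges_def Let_def by (intro UnI1) blast

lemma bwd_path:
  assumes "i < length cs"
  shows "(cs ! ((i + m) mod length cs), cs ! i) \<in> (reverse_edges E cs)\<^sup>*"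
proof (induction m)
  case 0 then show ?case using assms by simp
next
  case (Suc m)
  have "(i + m) mod length cs < length cs" using assms by (intro mod_less_divisor) linarith
  then have "(cs ! (((i + m) mod length cs + 1) mod length cs), cs ! ((i + m) mod length cs)) \<in> reverse_edges E cs"
    by (rule rev_cyc_edge)
  moreover have "((i + m) mod length cs + 1) mod length cs = (i + Suc m) mod length cs"
    by (metis add_Suc_right mod_Suc_eq Suc_eq_plus1)
  ultimately show ?case using Suc by (metis converse_rtrancl_into_rtrancl)
qed


theorem mainTheorem12:
  fixes V :: "'a set" and E :: "('a \<times> 'a) set" and cs :: "'a list"
  assumes "dcg V E"
    and "is_cycle E cs"
  shows "is_cycle (reverse_edges E cs) (rev cs)
    \<and> (\<forall>v \<in> V. desc E v = desc (reverse_edges E cs) v)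
    \<and> E = reverse_edges (reverse_edges E cs) (rev cs)"
proof -
  let ?k = "length cs"
  let ?H = "reverse_edges E cs"
  have cyc: "?k \<ge> 2" "distinct cs" "\<And>i. i < ?k \<Longrightarrow> (cs ! i, cs ! ((i + 1) mod ?k)) \<in> E"
    using assms(2) unfolding is_cycle_def by auto
  have noloop: "\<And>v. (v, v) \<notin> E" using assms(1) unfolding dcg_def by auto
  have Ep: "(cs ! i, cs ! j) \<in> E\<^sup>*" if "i < ?k" "j < ?k" for i j
    using fwd_path[OF assms(2) that(1), of "j + ?k - i"] that by simp
  have Hp: "(cs ! i, cs ! j) \<in> ?H\<^sup>*" if "i < ?k" "j < ?k" for i j
    using bwd_path[OF that(2), where m="i + ?k - j" and E=E] that by simp
  have EH: "E \<subseteq> ?H\<^sup>*"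
  proof
    fix x assume "x \<in> E"
    then obtain a b where ab: "x = (a, b)" "(a, b) \<in> E" by (cases x) auto
    show "x \<in> ?H\<^sup>*"
    proof (cases "b \<in> set cs")
      case False
      then show ?thesis using ab rev_char_out by fastforce
    next
      case True
      then obtain i where i: "i < ?k" "b = cs ! i" by (auto simp: in_set_conv_nth)
      let ?p = "(i + ?k - 1) mod ?k"
      have p: "?p < ?k" using i by (intro mod_less_divisor) linarith
      have np: "(?p + 1) mod ?k = i" using modpred[OF i(1) p] by simp
      show ?thesis
      proof (cases "a = cs ! ?p")
        case True
        then show ?thesis using Hp[OF p i(1)] ab i by simp
      next
        case False
        have "(a, cs ! ?p) \<in> ?H" using rev_char_in[OF cyc(2) p, of a E] np ab i False by simp
        then show ?thesis using Hp[OF p i(1)] ab i by simp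
      qed
    qed
  qed
  have HE: "?H \<subseteq> E\<^sup>*"
  proof
    fix x assume "x \<in> ?H"
    then obtain a b where ab: "x = (a, b)" "(a, b) \<in> ?H" by (cases x) auto
    show "x \<in> E\<^sup>*"
    proof (cases "b \<in> set cs")
      case False
      then show ?thesis using ab rev_char_out by fastforce
    next
      case True
      then obtain j where j: "j < ?k" "b = cs ! j" by (auto simp: in_set_conv_nth)
      let ?n = "(j + 1) mod ?k"
      have n: "?n < ?k" using j by (intro mod_less_divisor) linarith
      have "a = cs ! ?n \<or> (a, cs ! ?n) \<in> E" using rev_char_in[OF cyc(2) j(1), of a E] ab j by blast
      then show ?thesis using Ep[OF n j(1)] ab j by auto
    qed
  qed
  have eq: "E\<^sup>* = ?H\<^sup>*"
    using rtrancl_subset_rtrancl[OF EH] rtrancl_subset_rtrancl[OF HE] by blast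
  have C1: "is_cycle ?H (rev cs)"
    unfolding is_cycle_def
  proof (intro conjI allI impI)
    show "2 \<le> length (rev cs)" using cyc by simp
    show "distinct (rev cs)" using cyc by simp
    fix t assume t: "t < length (rev cs)"
    let ?i = "?k - 1 - t"
    have i: "?i < ?k" using t by simp
    have tt: "t = ?k - 1 - ?i" using t by simp
    let ?p = "(?i + ?k - 1) mod ?k"
    have p: "?p < ?k" using i by (intro mod_less_divisor) linarith
    have np: "(?p + 1) mod ?k = ?i" using modpred[OF i p] by simp
    have "(cs ! ?i, cs ! ?p) \<in> ?H" using rev_char_in[OF cyc(2) p, of "cs ! ?i" E] np by simp
    then show "(rev cs ! t, rev cs ! ((t + 1) mod length (rev cs))) \<in> ?H"
      using rev_nth_cyc[OF i] tt by (metis length_rev)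
  qed
  have C3: "E = reverse_edges ?H (rev cs)"
  proof (intro set_eqI)
    fix x :: "'a \<times> 'a"
    obtain a b where ab: "x = (a, b)" by (cases x) auto
    show "x \<in> E \<longleftrightarrow> x \<in> reverse_edges ?H (rev cs)"
    proof (cases "b \<in> set cs")
      case False
      then show ?thesis using ab rev_char_out[of b "rev cs"] rev_char_out[of b cs] by simp
    next
      case True
      then obtain i where i: "i < ?k" "b = cs ! i" by (auto simp: in_set_conv_nth)
      let ?t = "?k - 1 - i"
      have t: "?t < length (rev cs)" using i by simp
      let ?p = "(i + ?k - 1) mod ?k"
      have p: "?p < ?k" using i by (intro mod_less_divisor) linarith
      have np: "(?p + 1) mod ?k = i" using modpred[OF i(1) p] by simp
      have pe: "(cs ! ?p, cs ! i) \<in> E" using cyc(3)[OF p] np by simp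
      have dr: "distinct (rev cs)" using cyc(2) by simp
      note r0 = rev_char_in[OF dr t, of a ?H]
      have r1: "(a, cs ! i) \<in> reverse_edges ?H (rev cs) \<longleftrightarrow> a = cs ! ?p \<or> ((a, cs ! ?p) \<in> ?H \<and> a \<noteq> cs ! i)"
        using r0 unfolding length_rev rev_nth_cyc[OF i(1)] .
      have r2: "(a, cs ! ?p) \<in> ?H \<longleftrightarrow> a = cs ! i \<or> ((a, cs ! i) \<in> E \<and> a \<noteq> cs ! ?p)"
        using rev_char_in[OF cyc(2) p, of a E] unfolding np .
      have "x \<in> reverse_edges ?H (rev cs) \<longleftrightarrow> a = cs ! ?p \<or> ((a = cs ! i \<or> ((a, cs ! i) \<in> E \<and> a \<noteq> cs ! ?p)) \<and> a \<noteq> cs ! i)"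
        unfolding ab i(2) r1 r2 ..
      also have "\<dots> \<longleftrightarrow> x \<in> E" using pe noloop unfolding ab i(2) by blast
      finally show ?thesis by simp
    qed
  qed
  show ?thesis using C1 C3 eq unfolding desc_def by simp
qed

end
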